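(* Let $A$ be a commutative $\mathbb{N}$-graded ring generated as an $A_0$-algebra by homogeneous elements $x_1,\dots,x_n$ of positive degrees $\omega_1,\dots,\omega_n$, and let $w=\mathrm{lcm}(\omega_1,\dots,\omega_n)$. Let $k$ be a positive integer and $I=A_{\ge kw}$. If $I^p=A_{\ge pkw}$ for all integers $p$ with $1\le p\le \frac{n-2}{k}+1$, then $I^p=A_{\ge pkw}$ for all $p\ge 1$. In particular, if $k\ge n-1$, then $I^p=A_{\ge pkw}$ for all $p\ge1$.
   Context: For an $\mathbb{N}$-graded ring $A$ and a positive integer $m$, $A_{\ge m}=\bigoplus_{j\ge m}A_j$. *)

theory Defs
  imports Complex_Main
begin

definition graded_ring :: "(nat \<Rightarrow> 'a::comm_ring_1 set) \<Rightarrow> bool" where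
  "graded_ring G \<longleftrightarrow>
     (\<forall>i. 0 \<in> G i \<and> (\<forall>x\<in>G i. \<forall>y\<in>G i. x + y \<in> G i \<and> - x \<in> G i)) \<and>
     (\<forall>i j. \<forall>x\<in>G i. \<forall>y\<in>G j. x * y \<in> G (i + j)) \<and>
     1 \<in> G 0 \<and>
     (\<forall>a. \<exists>!c. (\<forall>i. c i \<in> G i) \<and> finite {i. c i \<noteq> 0} \<and>
                 a = (\<Sum>i\<in>{i. c i \<noteq> 0}. c i))"

definition graded_ge :: "(nat \<Rightarrow> 'a::comm_ring_1 set) \<Rightarrow> nat \<Rightarrow> 'a set" where
  "graded_ge G m = {a. \<exists>c. (\<forall>i. c i \<in> G i) \<and> finite {i. c i \<noteq> 0} \<and>
                          (\<forall>i<m. c i = 0) \<and> a = (\<Sum>i\<in>{i. c i \<noteq> 0}. c i)}"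

definition ideal_pow :: "'a::comm_ring_1 set \<Rightarrow> nat \<Rightarrow> 'a set" where
  "ideal_pow I p = {(\<Sum>k<m. \<Prod>j<p. f k j) | (m::nat) (f::nat \<Rightarrow> nat \<Rightarrow> 'a). \<forall>k<m. \<forall>j<p. f k j \<in> I}"

definition generated_by :: "(nat \<Rightarrow> 'a::comm_ring_1 set) \<Rightarrow> nat \<Rightarrow> (nat \<Rightarrow> 'a) \<Rightarrow> bool" where
  "generated_by G n x \<longleftrightarrow>
     (\<forall>a. \<exists>(m::nat) (c::nat \<Rightarrow> 'a) (e::nat \<Rightarrow> nat \<Rightarrow> nat). (\<forall>k<m. c k \<in> G 0) \<and>
                  a = (\<Sum>k<m. c k * (\<Prod>i<n. x i ^ e k i)))"

end

theory Submission
  imports Defs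
begin

lemma sum_lessThan_add_split:
  "(\<Sum>i<m1+m2. f i) = (\<Sum>i<m1. f i) + (\<Sum>i<m2. f (m1 + i))"
  for f :: "nat \<Rightarrow> 'a::comm_monoid_add"
  by (induction m2) (simp_all add: add.assoc)

inductive_set hspan :: "(nat \<Rightarrow> 'a::comm_ring_1 set) \<Rightarrow> nat \<Rightarrow> 'a set" for G m where
  hs0: "0 \<in> hspan G m"
| hsg: "g \<in> G i \<Longrightarrow> m \<le> i \<Longrightarrow> g \<in> hspan G m"
| hsadd: "a \<in> hspan G m \<Longrightarrow> b \<in> hspan G m \<Longrightarrow> a + b \<in> hspan G m"

lemma hspan_sum:
  assumes "finite S" "\<And>j. j \<in> S \<Longrightarrow> t j \<in> hspan G m"
  shows "sum t S \<in> hspan G m"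
  using assms by (induction S rule: finite_induct) (auto intro: hspan.intros)

lemma gr_add: "graded_ring G \<Longrightarrow> x \<in> G i \<Longrightarrow> y \<in> G i \<Longrightarrow> x + y \<in> G i"
  unfolding graded_ring_def by blast
lemma gr_zero: "graded_ring G \<Longrightarrow> 0 \<in> G i"
  unfolding graded_ring_def by blast
lemma gr_mult: "graded_ring G \<Longrightarrow> x \<in> G i \<Longrightarrow> y \<in> G j \<Longrightarrow> x * y \<in> G (i + j)"
  unfolding graded_ring_def by blast
lemma gr_one: "graded_ring G \<Longrightarrow> 1 \<in> G 0"
  unfolding graded_ring_def by blast

lemma gr_sum:
  assumes "graded_ring G" "finite S" "\<And>j. j \<in> S \<Longrightarrow> t j \<in> G i"
  shows "sum t S \<in> G i"
  using assms(2,3) by (induction S rule: finite_induct) (auto intro: gr_add[OF assms(1)] gr_zero[OF assms(1)])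

lemma hspan_mult_hom:
  assumes gr: "graded_ring G" and b: "b \<in> hspan G m'" and g: "g \<in> G i" "m \<le> i"
  shows "g * b \<in> hspan G (m + m')"
  using b
proof induction
  case hs0 then show ?case by (simp add: hspan.hs0)
next
  case (hsg h j) then show ?case using gr_mult[OF gr g(1), of h j] g(2)
    by (intro hspan.hsg[of _ G "i + j"]) auto
next
  case (hsadd a b) then show ?case by (simp add: distrib_left hspan.hsadd)
qed

lemma hspan_mult:
  assumes gr: "graded_ring G" and a: "a \<in> hspan G m" and b: "b \<in> hspan G m'"
  shows "a * b \<in> hspan G (m + m')"
  using a
proof induction
  case hs0 then show ?case by (simp add: hspan.hs0)
next
  case (hsg h j) then show ?case using hspan_mult_hom[OF gr b] by blast
next
  case (hsadd a c) then show ?case by (simp add: distrib_right hspan.hsadd)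
qed

lemma graded_ge_eq:
  assumes gr: "graded_ring G"
  shows "graded_ge G m = hspan G m"
proof
  show "graded_ge G m \<subseteq> hspan G m"
  proof
    fix a assume "a \<in> graded_ge G m"
    then obtain c where c: "\<forall>i. c i \<in> G i" "finite {i. c i \<noteq> 0}" "\<forall>i<m. c i = 0"
      "a = (\<Sum>i\<in>{i. c i \<noteq> 0}. c i)" unfolding graded_ge_def by blast
    have "(\<Sum>i\<in>{i. c i \<noteq> 0}. c i) \<in> hspan G m"
    proof (rule hspan_sum[OF c(2)])
      fix j assume "j \<in> {i. c i \<noteq> 0}"
      then have mj: "m \<le> j" using c(3) by (meson mem_Collect_eq not_le)
      show "c j \<in> hspan G m" by (rule hspan.hsg[OF _ mj]) (use c(1) in blast)
    qed
    then show "a \<in> hspan G m" using c(4) by simp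
  qed
next
  show "hspan G m \<subseteq> graded_ge G m"
  proof
    fix a assume "a \<in> hspan G m"
    then show "a \<in> graded_ge G m"
    proof induction
      case hs0
      show ?case unfolding graded_ge_def
        by (rule CollectI, rule exI[of _ "\<lambda>i. 0"]) (simp add: gr_zero[OF gr])
    next
      case (hsg g i)
      let ?c = "\<lambda>j. if j = i then g else 0"
      have "{j. ?c j \<noteq> 0} \<subseteq> {i}" by auto
      moreover have "(\<Sum>j\<in>{j. ?c j \<noteq> 0}. ?c j) = g"
        by (cases "g = 0") auto
      ultimately show ?case unfolding graded_ge_def using hsg gr_zero[OF gr]
        by (intro CollectI exI[of _ ?c]) (auto intro: finite_subset)
    next
      case (hsadd a b)
      obtain c where c: "\<forall>i. c i \<in> G i" "finite {i. c i \<noteq> 0}" "\<forall>i<m. c i = 0"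
        "a = (\<Sum>i\<in>{i. c i \<noteq> 0}. c i)" using hsadd(3) unfolding graded_ge_def by blast
      obtain d where d: "\<forall>i. d i \<in> G i" "finite {i. d i \<noteq> 0}" "\<forall>i<m. d i = 0"
        "b = (\<Sum>i\<in>{i. d i \<noteq> 0}. d i)" using hsadd(4) unfolding graded_ge_def by blast
      let ?S = "{i. c i \<noteq> 0} \<union> {i. d i \<noteq> 0}"
      have fS: "finite ?S" using c(2) d(2) by simp
      have a1: "(\<Sum>i\<in>{i. c i \<noteq> 0}. c i) = (\<Sum>i\<in>?S. c i)"
        by (rule sum.mono_neutral_left[OF fS]) auto
      have b1: "(\<Sum>i\<in>{i. d i \<noteq> 0}. d i) = (\<Sum>i\<in>?S. d i)"
        by (rule sum.mono_neutral_left[OF fS]) auto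
      have ab: "(\<Sum>i\<in>{i. c i + d i \<noteq> 0}. c i + d i) = (\<Sum>i\<in>?S. c i + d i)"
        by (rule sum.mono_neutral_left[OF fS]) auto
      have fin: "finite {i. c i + d i \<noteq> 0}" by (rule finite_subset[OF _ fS]) auto
      have sumeq: "a + b = (\<Sum>i\<in>{i. c i + d i \<noteq> 0}. c i + d i)"
        unfolding ab c(4) d(4) a1 b1 by (simp add: sum.distrib)
      have inG: "\<forall>i. c i + d i \<in> G i" using c(1) d(1) gr_add[OF gr] by blast
      have z: "\<forall>i<m. c i + d i = 0" using c(3) d(3) by simp
      show ?case unfolding graded_ge_def mem_Collect_eq
        by (rule exI[of _ "\<lambda>i. c i + d i"]) (use inG fin z sumeq in blast)
    qed
  qed
qed

lemma homog_proj:
  assumes gr: "graded_ring G" and fS: "finite S" and t: "\<And>j. j \<in> S \<Longrightarrow> t j \<in> G (dg j)"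
    and g: "g \<in> G d" "g = (\<Sum>j\<in>S. t j)"
  shows "g = (\<Sum>j\<in>{j\<in>S. dg j = d}. t j)"
proof -
  define c where "c i = (\<Sum>j\<in>{j\<in>S. dg j = i}. t j)" for i
  define c' where "c' i = (if i = d then g else 0)" for i
  have cG: "\<forall>i. c i \<in> G i"
  proof
    fix i show "c i \<in> G i" unfolding c_def by (rule gr_sum[OF gr]) (use fS t in auto)
  qed
  have supp: "{i. c i \<noteq> 0} \<subseteq> dg ` S"
  proof
    fix i assume i: "i \<in> {i. c i \<noteq> 0}"
    show "i \<in> dg ` S"
    proof (rule ccontr)
      assume "i \<notin> dg ` S"
      then have e: "{j\<in>S. dg j = i} = {}" by auto
      have "c i = 0" unfolding c_def e by simp
      then show False using i by simp
    qed
  qed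
  have fc: "finite {i. c i \<noteq> 0}" using supp fS finite_subset by blast
  have "(\<Sum>i\<in>{i. c i \<noteq> 0}. c i) = (\<Sum>i\<in>dg ` S. c i)"
    by (rule sum.mono_neutral_left[OF _ supp]) (use fS in auto)
  also have "\<dots> = (\<Sum>j\<in>S. t j)" unfolding c_def
    by (rule sum.group[OF fS]) (use fS in auto)
  finally have c_sum: "g = (\<Sum>i\<in>{i. c i \<noteq> 0}. c i)" using g(2) by simp
  have c'G: "\<forall>i. c' i \<in> G i" unfolding c'_def using g(1) gr_zero[OF gr] by auto
  have supp': "{i. c' i \<noteq> 0} \<subseteq> {d}" unfolding c'_def by auto
  have fc': "finite {i. c' i \<noteq> 0}" using supp' finite_subset by blast
  have c'_sum: "g = (\<Sum>i\<in>{i. c' i \<noteq> 0}. c' i)"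
    unfolding c'_def by (cases "g = 0") auto
  define Q where "Q f \<longleftrightarrow> (\<forall>i. f i \<in> G i) \<and> finite {i. f i \<noteq> 0} \<and> g = (\<Sum>i\<in>{i. f i \<noteq> 0}. f i)" for f
  have "\<forall>a. \<exists>!c. (\<forall>i. c i \<in> G i) \<and> finite {i. c i \<noteq> 0} \<and> a = (\<Sum>i\<in>{i. c i \<noteq> 0}. c i)"
    using gr unfolding graded_ring_def by (elim conjE)
  then have uniq: "\<exists>!c. Q c" unfolding Q_def by (rule spec)
  have P1: "Q c" unfolding Q_def using cG fc c_sum by simp
  have P2: "Q c'" unfolding Q_def using c'G fc' c'_sum by simp
  have "c = c'" using uniq P1 P2 by blast
  then have "c d = g" unfolding c'_def by simp
  then show ?thesis unfolding c_def by simp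
qed

lemma ip_zero: "0 \<in> ideal_pow I p"
  unfolding ideal_pow_def by (rule CollectI, rule exI[of _ 0]) auto

lemma ip_add:
  assumes "a \<in> ideal_pow I p" "b \<in> ideal_pow I p"
  shows "a + b \<in> ideal_pow I p"
proof -
  have "\<exists>(m1::nat) f1. a = (\<Sum>k<m1. \<Prod>j<p. f1 k j) \<and> (\<forall>k<m1. \<forall>j<p. f1 k j \<in> I)"
    using assms(1) unfolding ideal_pow_def by simp
  then obtain m1 :: nat and f1 where 1: "a = (\<Sum>k<m1. \<Prod>j<p. f1 k j)" "\<forall>k<m1. \<forall>j<p. f1 k j \<in> I"
    by blast
  have "\<exists>(m2::nat) f2. b = (\<Sum>k<m2. \<Prod>j<p. f2 k j) \<and> (\<forall>k<m2. \<forall>j<p. f2 k j \<in> I)"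
    using assms(2) unfolding ideal_pow_def by simp
  then obtain m2 :: nat and f2 where 2: "b = (\<Sum>k<m2. \<Prod>j<p. f2 k j)" "\<forall>k<m2. \<forall>j<p. f2 k j \<in> I"
    by blast
  define f where "f k = (if k < m1 then f1 k else f2 (k - m1))" for k
  have c1: "(\<Sum>k<m1+m2. \<Prod>j<p. f k j) = a + b"
    unfolding sum_lessThan_add_split 1 2 f_def by simp
  have c2: "\<forall>k<m1+m2. \<forall>j<p. f k j \<in> I" unfolding f_def using 1 2 by auto
  show ?thesis unfolding ideal_pow_def mem_Collect_eq
    by (rule exI[of _ "m1+m2"], rule exI[of _ f]) (use c1 c2 in auto)
qed

lemma ip_sum:
  assumes "finite S" "\<And>j. j \<in> S \<Longrightarrow> t j \<in> ideal_pow I p"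
  shows "sum t S \<in> ideal_pow I p"
  using assms by (induction S rule: finite_induct) (auto intro: ip_zero ip_add)

lemma ip_mult:
  assumes a: "a \<in> I" and b: "b \<in> ideal_pow I p"
  shows "a * b \<in> ideal_pow I (Suc p)"
proof -
  have "\<exists>(m::nat) f. b = (\<Sum>k<m. \<Prod>j<p. f k j) \<and> (\<forall>k<m. \<forall>j<p. f k j \<in> I)"
    using b unfolding ideal_pow_def by simp
  then obtain m :: nat and f where 1: "b = (\<Sum>k<m. \<Prod>j<p. f k j)" "\<forall>k<m. \<forall>j<p. f k j \<in> I"
    by blast
  define f' where "f' k j = (if j = p then a else f k j)" for k j
  have c1: "(\<Sum>k<m. \<Prod>j<Suc p. f' k j) = a * b"
    unfolding 1 f'_def by (simp add: sum_distrib_left mult.commute)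
  have c2: "\<forall>k<m. \<forall>j<Suc p. f' k j \<in> I" unfolding f'_def using 1 a by auto
  show ?thesis unfolding ideal_pow_def mem_Collect_eq
    by (rule exI[of _ m], rule exI[of _ f']) (use c1 c2 in auto)
qed

lemma ip_one: "I \<subseteq> ideal_pow I 1"
proof
  fix a assume "a \<in> I"
  then show "a \<in> ideal_pow I 1" unfolding ideal_pow_def
    by (intro CollectI exI[of _ "1::nat"] exI[of _ "\<lambda>k j. a"]) auto
qed

lemma ip_sub:
  assumes gr: "graded_ring G" and I: "I \<subseteq> hspan G m"
  shows "ideal_pow I p \<subseteq> hspan G (p * m)"
proof
  fix a assume "a \<in> ideal_pow I p"
  then have "\<exists>(M::nat) f. a = (\<Sum>k<M. \<Prod>j<p. f k j) \<and> (\<forall>k<M. \<forall>j<p. f k j \<in> I)"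
    unfolding ideal_pow_def by simp
  then obtain M :: nat and f where 1: "a = (\<Sum>k<M. \<Prod>j<p. f k j)" "\<forall>k<M. \<forall>j<p. f k j \<in> I"
    by blast
  have pr: "(\<Prod>j<q. f k j) \<in> hspan G (q * m)" if "k < M" "q \<le> p" for k q
    using that(2)
  proof (induction q)
    case 0 then show ?case using gr_one[OF gr] by (auto intro: hspan.hsg)
  next
    case (Suc q)
    have "f k q \<in> hspan G m" using 1(2) that(1) Suc(2) I by auto
    then have "f k q * (\<Prod>j<q. f k j) \<in> hspan G (m + q * m)"
      using hspan_mult[OF gr] Suc by auto
    then show ?case by (simp add: mult.commute)
  qed
  show "a \<in> hspan G (p * m)" unfolding 1(1) by (rule hspan_sum) (use pr in auto)
qed

lemma split_exp:
  assumes "\<forall>i<n. 0 < \<omega> i \<and> \<omega> i dvd w" "0 < w"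
    and "K * w + n * w < (\<Sum>i<n. e i * \<omega> i) + w + n"
  shows "\<exists>e'. (\<forall>i<n. e' i \<le> e i) \<and> (\<Sum>i<n. e' i * \<omega> i) = K * (w::nat)"
  using assms
proof (induction n arbitrary: K)
  case 0
  then have "K = 0" by (cases K) auto
  then show ?case by auto
next
  case (Suc n)
  obtain u where u: "w = u * \<omega> n" using Suc(2) by (metis dvd_def lessI mult.commute)
  have om: "0 < \<omega> n" using Suc(2) by auto
  define q where "q = e n div u"
  define r where "r = e n mod u"
  have upos: "0 < u" using Suc(3) u by (cases u) auto
  have en: "e n = q * u + r" unfolding q_def r_def by simp
  have ru: "r < u" unfolding r_def using upos by simp
  show ?case
  proof (cases "K \<le> q")
    case True
    define e' where "e' i = (if i = n then K * u else 0)" for i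
    have "K * u \<le> e n" using True en by (metis add.commute le_add2 mult_le_mono1 order_trans)
    then have "\<forall>i<Suc n. e' i \<le> e i" unfolding e'_def by auto
    moreover have "(\<Sum>i<Suc n. e' i * \<omega> i) = K * w" unfolding e'_def u by simp
    ultimately show ?thesis by blast
  next
    case False
    have "r * \<omega> n + \<omega> n \<le> u * \<omega> n" using ru
      by (metis Suc_leI add.commute mult_Suc mult_le_mono1)
    then have "e n * \<omega> n + 1 \<le> q * w + w" using om unfolding en u
      by (simp add: algebra_simps)
    then have A: "K * w + n * w < (\<Sum>i<n. e i * \<omega> i) + q * w + w + n"
      using Suc(4) by simp
    have B: "q * w \<le> K * w" using False by simp
    have C: "(K - q) * w = K * w - q * w" by (simp add: diff_mult_distrib)
    have "(K - q) * w + n * w < (\<Sum>i<n. e i * \<omega> i) + w + n"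
      using A B C by linarith
    then obtain e'' where e'': "\<forall>i<n. e'' i \<le> e i" "(\<Sum>i<n. e'' i * \<omega> i) = (K - q) * w"
      using Suc.IH[of "K - q"] Suc(2,3) by auto
    define e' where "e' = e''(n := q * u)"
    have "\<forall>i<Suc n. e' i \<le> e i" unfolding e'_def using e''(1) en by (auto simp: less_Suc_eq)
    moreover have s1: "(\<Sum>i<n. e' i * \<omega> i) = (\<Sum>i<n. e'' i * \<omega> i)"
      unfolding e'_def by (intro sum.cong) auto
    have "e' n * \<omega> n = q * w" unfolding e'_def u by simp
    then have "(\<Sum>i<Suc n. e' i * \<omega> i) = (K - q) * w + q * w"
      using s1 e''(2) by simp
    moreover have "(K - q) * w + q * w = K * w" using False
      by (metis add_mult_distrib le_add_diff_inverse2 nat_le_linear)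
    ultimately show ?thesis by (intro exI[of _ e']) simp
  qed
qed


lemma pow_hom:
  assumes gr: "graded_ring G" and x: "y \<in> G d"
  shows "y ^ j \<in> G (j * d)"
proof (induction j)
  case 0 then show ?case using gr_one[OF gr] by simp
next
  case (Suc j)
  then have "y * y ^ j \<in> G (d + j * d)" using gr_mult[OF gr x] by blast
  then show ?case by simp
qed

lemma mono_hom:
  fixes n :: nat
  assumes gr: "graded_ring G" and hx: "\<forall>i<n. x i \<in> G (\<omega> i)"
  shows "(\<Prod>i<n. x i ^ e i) \<in> G (\<Sum>i<n. e i * \<omega> i)"
  using hx
proof (induction n)
  case 0 then show ?case using gr_one[OF gr] by simp
next
  case (Suc n)
  have "x n ^ e n \<in> G (e n * \<omega> n)" using pow_hom[OF gr] Suc(2) by auto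
  then have "(\<Prod>i<n. x i ^ e i) * x n ^ e n \<in> G ((\<Sum>i<n. e i * \<omega> i) + e n * \<omega> n)"
    using gr_mult[OF gr] Suc by auto
  then show ?case by simp
qed

lemma key_term:
  fixes n p :: nat
  assumes gr: "graded_ring G" and hx: "\<forall>i<n. 0 < \<omega> i \<and> x i \<in> G (\<omega> i)"
    and dv: "\<forall>i<n. \<omega> i dvd w" and wpos: "0 < w"
    and Ieq: "I = hspan G (k * w)"
    and P: "ideal_pow I p = hspan G (p * k * w)"
    and nk: "n \<le> p * k + 1" and c: "c \<in> G 0"
    and d: "Suc p * k * w \<le> (\<Sum>i<n. e i * \<omega> i)"
  shows "c * (\<Prod>i<n. x i ^ e i) \<in> ideal_pow I (Suc p)"
proof -
  define D where "D = (\<Sum>i<n. e i * \<omega> i)"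
  have e1: "Suc p * k * w = k * w + p * k * w" by (simp add: algebra_simps)
  have "n * w \<le> (p * k + 1) * w" using nk by (rule mult_le_mono1)
  then have e2: "n * w \<le> p * k * w + w" by (simp add: algebra_simps)
  have ineq: "k * w + n * w < D + w + n"
  proof (cases "n = 0")
    case True then show ?thesis using d e1 wpos unfolding D_def by simp
  next
    case False then show ?thesis using d e1 e2 unfolding D_def by linarith
  qed
  obtain e' where e': "\<forall>i<n. e' i \<le> e i" "(\<Sum>i<n. e' i * \<omega> i) = k * w"
    using split_exp[of n \<omega> w k e] hx dv wpos ineq unfolding D_def by auto
  define e2 where "e2 i = e i - e' i" for i
  have "D = (\<Sum>i<n. (e' i + e2 i) * \<omega> i)" unfolding D_def e2_def
    by (intro sum.cong) (use e'(1) in auto)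
  also have "\<dots> = k * w + (\<Sum>i<n. e2 i * \<omega> i)"
    by (simp add: add_mult_distrib sum.distrib e'(2))
  finally have deg: "D = k * w + (\<Sum>i<n. e2 i * \<omega> i)" .
  have "(\<Prod>i<n. x i ^ e i) = (\<Prod>i<n. x i ^ e' i * x i ^ e2 i)" unfolding e2_def
    by (intro prod.cong) (use e'(1) in \<open>auto simp: power_add[symmetric]\<close>)
  also have "\<dots> = (\<Prod>i<n. x i ^ e' i) * (\<Prod>i<n. x i ^ e2 i)" by (rule prod.distrib)
  finally have mono: "(\<Prod>i<n. x i ^ e i) = (\<Prod>i<n. x i ^ e' i) * (\<Prod>i<n. x i ^ e2 i)" .
  have hx': "\<forall>i<n. x i \<in> G (\<omega> i)" using hx by auto
  have m1: "(\<Prod>i<n. x i ^ e' i) \<in> I"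
    using mono_hom[OF gr hx', of e'] e'(2) Ieq by (auto intro: hspan.hsg)
  have "c * (\<Prod>i<n. x i ^ e2 i) \<in> G (0 + (\<Sum>i<n. e2 i * \<omega> i))"
    using gr_mult[OF gr c mono_hom[OF gr hx', of e2]] .
  moreover have "p * k * w \<le> (\<Sum>i<n. e2 i * \<omega> i)" using deg d e1 unfolding D_def by linarith
  ultimately have "c * (\<Prod>i<n. x i ^ e2 i) \<in> hspan G (p * k * w)"
    by (intro hspan.hsg[of _ G "0 + (\<Sum>i<n. e2 i * \<omega> i)"]) auto
  then have m2: "c * (\<Prod>i<n. x i ^ e2 i) \<in> ideal_pow I p" using P by simp
  have "c * (\<Prod>i<n. x i ^ e i) = (\<Prod>i<n. x i ^ e' i) * (c * (\<Prod>i<n. x i ^ e2 i))"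
    unfolding mono by (simp add: mult.left_commute)
  then show ?thesis using ip_mult[OF m1 m2] by simp
qed

theorem lemma3p5:
  fixes G :: "nat \<Rightarrow> 'a::comm_ring_1 set"
    and n :: nat and x :: "nat \<Rightarrow> 'a" and \<omega> :: "nat \<Rightarrow> nat" and k :: nat
  assumes "graded_ring G"
    and "\<forall>i<n. 0 < \<omega> i \<and> x i \<in> G (\<omega> i)"
    and "generated_by G n x"
    and "0 < k"
  defines "w \<equiv> Lcm (\<omega> ` {..<n})"
  defines "I \<equiv> graded_ge G (k * w)"
  shows "((\<forall>p::nat. 1 \<le> p \<and> real p \<le> (real n - 2) / real k + 1 \<longrightarrow>
              ideal_pow I p = graded_ge G (p * k * w)) \<longrightarrow>
          (\<forall>p::nat. 1 \<le> p \<longrightarrow> ideal_pow I p = graded_ge G (p * k * w)))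
       \<and> (int k \<ge> int n - 1 \<longrightarrow>
          (\<forall>p::nat. 1 \<le> p \<longrightarrow> ideal_pow I p = graded_ge G (p * k * w)))"
proof -
  note gr = assms(1) and hx = assms(2) and kpos = assms(4)
  have "0 \<notin> \<omega> ` {..<n}" using hx by auto
  then have "Lcm (\<omega> ` {..<n}) \<noteq> 0" by (subst Lcm_0_iff) auto
  then have wpos: "0 < w" unfolding w_def by (metis gr0I)
  have dv: "\<forall>i<n. \<omega> i dvd w" unfolding w_def by (intro allI impI dvd_Lcm imageI) simp
  have Ieq: "I = hspan G (k * w)" unfolding I_def using graded_ge_eq[OF gr] .
  have ge: "\<And>m. graded_ge G m = hspan G m" using graded_ge_eq[OF gr] .
  have sub: "ideal_pow I p \<subseteq> hspan G (p * k * w)" for p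
    using ip_sub[OF gr, of I "k * w" p] Ieq by (simp add: mult.assoc)
  have P1: "ideal_pow I 1 = graded_ge G (1 * k * w)"
    using sub[of 1] ip_one[of I] Ieq ge by auto
  have stepP: "ideal_pow I (Suc p) = graded_ge G (Suc p * k * w)"
    if P: "ideal_pow I p = graded_ge G (p * k * w)" and nk: "n \<le> p * k + 1" for p
  proof
    show "ideal_pow I (Suc p) \<subseteq> graded_ge G (Suc p * k * w)" using sub ge by blast
    show "graded_ge G (Suc p * k * w) \<subseteq> ideal_pow I (Suc p)"
    proof
      fix a assume "a \<in> graded_ge G (Suc p * k * w)"
      then have "a \<in> hspan G (Suc p * k * w)" using ge by simp
      then show "a \<in> ideal_pow I (Suc p)"
      proof induction
        case hs0 then show ?case by (rule ip_zero)
      next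
        case (hsadd a b) then show ?case by (simp add: ip_add)
      next
        case (hsg g d)
        obtain m :: nat and c :: "nat \<Rightarrow> 'a" and e :: "nat \<Rightarrow> nat \<Rightarrow> nat" where
          ce: "\<forall>j<m. c j \<in> G 0" "g = (\<Sum>j<m. c j * (\<Prod>i<n. x i ^ e j i))"
          using assms(3) unfolding generated_by_def by blast
        have hx': "\<forall>i<n. x i \<in> G (\<omega> i)" using hx by auto
        have t: "c j * (\<Prod>i<n. x i ^ e j i) \<in> G (\<Sum>i<n. e j i * \<omega> i)" if "j \<in> {..<m}" for j
          using gr_mult[OF gr, of "c j" 0 _ "\<Sum>i<n. e j i * \<omega> i"] ce(1) that
            mono_hom[OF gr hx', of "e j"] by auto
        have g2: "g = (\<Sum>j\<in>{j\<in>{..<m}. (\<Sum>i<n. e j i * \<omega> i) = d}. c j * (\<Prod>i<n. x i ^ e j i))"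
          by (rule homog_proj[OF gr _ t hsg(1) ce(2)]) simp
        show ?case unfolding g2
        proof (rule ip_sum)
          fix j assume j: "j \<in> {j\<in>{..<m}. (\<Sum>i<n. e j i * \<omega> i) = d}"
          show "c j * (\<Prod>i<n. x i ^ e j i) \<in> ideal_pow I (Suc p)"
            by (rule key_term[OF gr hx dv wpos Ieq _ nk]) (use P ge ce(1) j hsg(2) in auto)
        qed simp
      qed
    qed
  qed
  have allp: "\<forall>p. 1 \<le> p \<longrightarrow> ideal_pow I p = graded_ge G (p * k * w)"
    if H: "\<And>p. 1 \<le> p \<Longrightarrow> ideal_pow I p = graded_ge G (p * k * w) \<Longrightarrow> n \<le> p * k + 1 \<or> ideal_pow I (Suc p) = graded_ge G (Suc p * k * w)"
  proof (intro allI impI)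
    fix p :: nat assume "1 \<le> p"
    then show "ideal_pow I p = graded_ge G (p * k * w)"
    proof (induction p rule: dec_induct)
      case base then show ?case using P1 by simp
    next
      case (step q) then show ?case using H[of q] stepP[of q] by auto
    qed
  qed
  show ?thesis
  proof (intro conjI impI)
    assume A: "\<forall>p::nat. 1 \<le> p \<and> real p \<le> (real n - 2) / real k + 1 \<longrightarrow>
              ideal_pow I p = graded_ge G (p * k * w)"
    show "\<forall>p. 1 \<le> p \<longrightarrow> ideal_pow I p = graded_ge G (p * k * w)"
    proof (rule allp)
      fix p :: nat assume p1: "1 \<le> p"
      show "n \<le> p * k + 1 \<or> ideal_pow I (Suc p) = graded_ge G (Suc p * k * w)"
      proof (cases "real (Suc p) \<le> (real n - 2) / real k + 1")
        case True
        have s1: "1 \<le> Suc p" by simp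
        have "ideal_pow I (Suc p) = graded_ge G (Suc p * k * w)" using A s1 True by blast
        then show ?thesis by blast
      next
        case False
        then have "(real n - 2) / real k < real p" by simp
        then have "real n - 2 < real p * real k" using kpos by (simp add: divide_less_eq)
        then have "real n < real (p * k + 2)" by simp
        then have "n < p * k + 2" by (simp only: of_nat_less_iff)
        then show ?thesis by simp
      qed
    qed
  next
    assume B: "int k \<ge> int n - 1"
    show "\<forall>p. 1 \<le> p \<longrightarrow> ideal_pow I p = graded_ge G (p * k * w)"
    proof (rule allp)
      fix p :: nat assume p1: "1 \<le> p"
      have "k \<le> p * k" using p1 by simp
      then show "n \<le> p * k + 1 \<or> ideal_pow I (Suc p) = graded_ge G (Suc p * k * w)" using B by linarith
    qed
  qed
qed

end
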